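(* Let $\mathbf w\in\mathbb R^m$. The positional voting method $B_{\mathbf w}$ is Pareto efficient if and only if $\mathbf w$ is strictly decreasing, i.e. $\mathbf w(1)>\mathbf w(2)>\cdots>\mathbf w(m)$.
   Context: Fix an integer $n\ge 2$ and a set $\mathbf C$ of $n$ candidates. Fix a composition $\lambda=(\lambda_1,\dots,\lambda_m)$ of $n$ (positive integers with $\sum_i\lambda_i=n$), write $[m]=\{1,\dots,m\}$. A ballot is a function $b:\mathbf C\to[m]$ with $|b^{-1}(i)|=\lambda_i$ for every $i$; $\mathbf C_\lambda$ denotes the set of ballots. The profile space is $P=\mathbb R^{\mathbf C_\lambda}$ with basis $\{\delta_b\}$ (indicator functions) and inner product $\mathbf p\cdot\mathbf q=\sum_b\mathbf p(b)\mathbf q(b)$. For $\mathbf w\in\mathbb R^m$ (a function $[m]\to\mathbb R$) and $X\in\mathbf C$, $\mathbf v_X\in P$ is $\mathbf v_X(b)=\mathbf w(b(X))$; the positional voting method $B_{\mathbf w}:P\to\mathbb R^{\mathbf C}$ is $B_{\mathbf w}(\mathbf p)(X)=\mathbf p\cdot\mathbf v_X$. A profile $\mathbf p$ prefers $X$ unanimously to $Y$ if $\mathbf p(b)\ge 0$ for every ballot with $b(X)<b(Y)$, $\mathbf p(b)\le0$ for every ballot with $b(X)>b(Y)$, and $\mathbf p(b)\neq0$ for at least one ballot with $b(X)\ne b(Y)$ (no condition on ballots with $b(X)=b(Y)$). A map $F:P\to\mathbb R^{\mathbf C}$ is Pareto efficient if for every ordered pair of distinct candidates $X,Y$ and every profile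 $\mathbf p$ preferring $X$ unanimously to $Y$, $F(\mathbf p)(X)>F(\mathbf p)(Y)$. *)

theory Defs
  imports Complex_Main
begin

text \<open>Candidates: the elements of a finite type 'c (n = CARD('c)).
  A composition lambda of n is a list lam of positive naturals summing to n; m = length lam,
  and lambda_i = lam ! (i - 1) for i in {1..m}.
  A profile is a real-valued function on ballots (values outside the ballot set are ignored).
  Weight vectors w are functions nat => real, only w 1 .. w m matter.\<close>

definition is_composition :: "nat list \<Rightarrow> nat \<Rightarrow> bool" where
  "is_composition lam n \<longleftrightarrow> (\<forall>l\<in>set lam. 0 < l) \<and> sum_list lam = n"

definition ballots :: "nat list \<Rightarrow> ('c::finite \<Rightarrow> nat) set" where
  "ballots lam = {b. (\<forall>X. b X \<in> {1..length lam}) \<and>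
     (\<forall>i\<in>{1..length lam}. card {X. b X = i} = lam ! (i - 1))}"

definition positional_method ::
  "(nat \<Rightarrow> real) \<Rightarrow> nat list \<Rightarrow> (('c::finite \<Rightarrow> nat) \<Rightarrow> real) \<Rightarrow> 'c \<Rightarrow> real" where
  "positional_method w lam p X = (\<Sum>b\<in>ballots lam. p b * w (b X))"

definition prefers_unanimously ::
  "nat list \<Rightarrow> (('c::finite \<Rightarrow> nat) \<Rightarrow> real) \<Rightarrow> 'c \<Rightarrow> 'c \<Rightarrow> bool" where
  "prefers_unanimously lam p X Y \<longleftrightarrow>
     (\<forall>b\<in>ballots lam. b X < b Y \<longrightarrow> p b \<ge> 0) \<and>
     (\<forall>b\<in>ballots lam. b X > b Y \<longrightarrow> p b \<le> 0) \<and>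
     (\<exists>b\<in>ballots lam. b X \<noteq> b Y \<and> p b \<noteq> 0)"

definition pareto_efficient ::
  "nat list \<Rightarrow> ((('c::finite \<Rightarrow> nat) \<Rightarrow> real) \<Rightarrow> 'c \<Rightarrow> real) \<Rightarrow> bool" where
  "pareto_efficient lam F \<longleftrightarrow>
     (\<forall>X Y p. X \<noteq> Y \<longrightarrow> prefers_unanimously lam p X Y \<longrightarrow> F p X > F p Y)"

end

theory Submission
  imports Defs
begin

lemma exists_assign:
  fixes S :: "'c set"
  assumes "finite S" "card S = sum_list lam"
  shows "\<exists>b::'c \<Rightarrow> nat. (\<forall>X\<in>S. b X \<in> {1..length lam}) \<and>
           (\<forall>i\<in>{1..length lam}. card {X\<in>S. b X = i} = lam ! (i - 1))"
  using assms
proof (induction lam arbitrary: S rule: rev_induct)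
  case Nil
  then show ?case by auto
next
  case (snoc a lam)
  obtain T where T: "T \<subseteq> S" "card T = a"
    using obtain_subset_with_card_n[of a S] snoc.prems by auto
  have fT: "finite T" using T snoc.prems finite_subset by blast
  have "card (S - T) = sum_list lam"
    using snoc.prems T fT by (simp add: card_Diff_subset)
  then obtain b where b: "\<forall>X\<in>S - T. b X \<in> {1..length lam}"
     "\<forall>i\<in>{1..length lam}. card {X\<in>S - T. b X = i} = lam ! (i - 1)"
    using snoc.IH[of "S - T"] snoc.prems by auto
  define b' where "b' X = (if X \<in> T then Suc (length lam) else b X)" for X
  have "\<forall>X\<in>S. b' X \<in> {1..length (lam @ [a])}"
  proof
    fix X assume X: "X \<in> S"
    show "b' X \<in> {1..length (lam @ [a])}"
    proof (cases "X \<in> T")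
      case False
      then have "b X \<in> {1..length lam}" using b(1) X by blast
      then show ?thesis using False by (simp add: b'_def)
    qed (simp add: b'_def)
  qed
  moreover have "card {X\<in>S. b' X = i} = (lam @ [a]) ! (i - 1)"
    if i: "i \<in> {1..length (lam @ [a])}" for i
  proof (cases "i = Suc (length lam)")
    case True
    have "{X\<in>S. b' X = i} = T" using T b(1) True by (auto simp: b'_def) (metis DiffI Suc_n_not_le_n)+
    then show ?thesis using True T by (simp add: nth_append)
  next
    case False
    then have i2: "i \<in> {1..length lam}" using i by auto
    have "{X\<in>S. b' X = i} = {X\<in>S - T. b X = i}" using False by (auto simp: b'_def)
    then show ?thesis using b(2) i2 by (auto simp: nth_append)
  qed
  ultimately show ?case by blast
qed

lemma finite_ballots: "finite (ballots lam :: ('c::finite \<Rightarrow> nat) set)"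
proof -
  have "ballots lam \<subseteq> {f. \<forall>x. (x \<in> (UNIV::'c set) \<longrightarrow> f x \<in> {1..length lam}) \<and> (x \<notin> UNIV \<longrightarrow> f x = 0)}"
    by (auto simp: ballots_def)
  then show ?thesis using finite_set_of_finite_funs[of "UNIV::'c set" "{1..length lam}" 0] finite_subset by auto
qed

theorem mainTheorem9:
  fixes lam :: "nat list" and w :: "nat \<Rightarrow> real"
  assumes "card (UNIV :: 'c::finite set) \<ge> 2"
    and "is_composition lam (card (UNIV :: 'c set))"
  shows "pareto_efficient lam (positional_method w lam :: (('c \<Rightarrow> nat) \<Rightarrow> real) \<Rightarrow> 'c \<Rightarrow> real)
         \<longleftrightarrow> (\<forall>i j. 1 \<le> i \<longrightarrow> i < j \<longrightarrow> j \<le> length lam \<longrightarrow> w i > w j)"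
proof
  assume PE: "pareto_efficient lam (positional_method w lam :: (('c \<Rightarrow> nat) \<Rightarrow> real) \<Rightarrow> 'c \<Rightarrow> real)"
  show "\<forall>i j. 1 \<le> i \<longrightarrow> i < j \<longrightarrow> j \<le> length lam \<longrightarrow> w i > w j"
  proof (intro allI impI)
    fix i j assume ij: "1 \<le> i" "i < j" "j \<le> length lam"
    obtain b0 :: "'c \<Rightarrow> nat" where b0: "\<forall>X\<in>UNIV. b0 X \<in> {1..length lam}"
      "\<forall>i\<in>{1..length lam}. card {X\<in>UNIV. b0 X = i} = lam ! (i - 1)"
      using exists_assign[of "UNIV::'c set" lam] assms(2) by (auto simp: is_composition_def)
    have b0B: "b0 \<in> ballots lam" using b0 by (auto simp: ballots_def)
    have pos: "lam ! (k - 1) > 0" if "k \<in> {1..length lam}" for k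
      using assms(2) that by (auto simp: is_composition_def)
    have "card {X. b0 X = i} > 0" using b0(2) pos[of i] ij by auto
    then obtain X where X: "b0 X = i" by (metis (mono_tags) card.empty empty_Collect_eq less_irrefl)
    have "card {X. b0 X = j} > 0" using b0(2) pos[of j] ij by auto
    then obtain Y where Y: "b0 Y = j" by (metis (mono_tags) card.empty empty_Collect_eq less_irrefl)
    have XY: "X \<noteq> Y" using X Y ij by auto
    define p :: "('c \<Rightarrow> nat) \<Rightarrow> real" where "p b = (if b = b0 then 1 else 0)" for b
    have "prefers_unanimously lam p X Y"
      unfolding prefers_unanimously_def using b0B X Y ij by (auto simp: p_def)
    then have gt: "positional_method w lam p X > positional_method w lam p Y"
      using PE XY unfolding pareto_efficient_def by blast
    have ev: "positional_method w lam p Z = w (b0 Z)" for Z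
    proof -
      have "positional_method w lam p Z = (\<Sum>b\<in>ballots lam. if b = b0 then w (b0 Z) else 0)"
        unfolding positional_method_def by (rule sum.cong) (auto simp: p_def)
      also have "\<dots> = w (b0 Z)" by (subst sum.delta[OF finite_ballots]) (simp add: b0B)
      finally show ?thesis .
    qed
    show "w i > w j" using gt ev X Y by simp
  qed
next
  assume W: "\<forall>i j. 1 \<le> i \<longrightarrow> i < j \<longrightarrow> j \<le> length lam \<longrightarrow> w i > w j"
  show "pareto_efficient lam (positional_method w lam :: (('c \<Rightarrow> nat) \<Rightarrow> real) \<Rightarrow> 'c \<Rightarrow> real)"
    unfolding pareto_efficient_def
  proof (intro allI impI)
    fix X Y :: 'c and p :: "('c \<Rightarrow> nat) \<Rightarrow> real"
    assume "X \<noteq> Y" and PU: "prefers_unanimously lam p X Y"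
    have rng: "b Z \<in> {1..length lam}" if "b \<in> ballots lam" for b :: "'c \<Rightarrow> nat" and Z
      using that by (auto simp: ballots_def)
    have nn: "0 \<le> p b * (w (b X) - w (b Y))" if bB: "b \<in> ballots lam" for b
    proof -
      consider "b X < b Y" | "b X > b Y" | "b X = b Y" by linarith
      then show ?thesis
      proof cases
        case 1
        then have "w (b X) > w (b Y)" using W rng[OF bB, of X] rng[OF bB, of Y] by auto
        moreover have "p b \<ge> 0" using PU bB 1 by (auto simp: prefers_unanimously_def)
        ultimately show ?thesis by simp
      next
        case 2
        then have "w (b X) < w (b Y)" using W rng[OF bB, of X] rng[OF bB, of Y] by auto
        moreover have "p b \<le> 0" using PU bB 2 by (auto simp: prefers_unanimously_def)
        ultimately show ?thesis by (simp add: mult_nonpos_nonpos)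
      qed simp
    qed
    obtain b where bB: "b \<in> ballots lam" and bne: "b X \<noteq> b Y" and pb: "p b \<noteq> 0"
      using PU by (auto simp: prefers_unanimously_def)
    have "0 < p b * (w (b X) - w (b Y))"
    proof (cases "b X < b Y")
      case True
      then have "w (b X) > w (b Y)" using W rng[OF bB, of X] rng[OF bB, of Y] by auto
      moreover have "p b \<ge> 0" using PU bB True by (auto simp: prefers_unanimously_def)
      ultimately show ?thesis using pb by simp
    next
      case False
      then have "b X > b Y" using bne by simp
      then have "w (b X) < w (b Y)" using W rng[OF bB, of X] rng[OF bB, of Y] by auto
      moreover have "p b \<le> 0" using PU bB \<open>b X > b Y\<close> by (auto simp: prefers_unanimously_def)
      ultimately show ?thesis using pb by (simp add: mult_neg_neg)
    qed
    then have "0 < (\<Sum>b\<in>ballots lam. p b * (w (b X) - w (b Y)))"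
      by (rule sum_pos2[OF finite_ballots bB]) (use nn in auto)
    also have "\<dots> = positional_method w lam p X - positional_method w lam p Y"
      unfolding positional_method_def sum_subtractf[symmetric] by (simp add: right_diff_distrib)
    finally show "positional_method w lam p X > positional_method w lam p Y" by simp
  qed
qed

end
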